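(* Let $k$ be a field of characteristic $0$, $A$ a commutative $k$-algebra with an ideal $I$, $I^2=0$, such that $\underline{A}:=A/I$ is smooth over $k$, and let $\tau:\underline{A}\to A$ be a $k$-algebra splitting of $A\to\underline{A}$; regard $A$ as an $\underline{A}$-algebra via $\tau$. Let $B\twoheadrightarrow A$ be a surjection of $\underline{A}$-algebras with $B$ smooth over $\underline{A}$, let $\hat{B}$ be the completion of $B$ along the kernel of this surjection, $\hat{J}$ the kernel of the induced surjection $\hat{B}\to A$, $\hat{I}$ the inverse image of $I$ in $\hat{B}$, and $\hat{\tau}:\underline{A}\to\hat{B}$ the structure map. For $a\in A^\flat$, let $\underline{a}$ be its image in $\underline{A}$, $\hat{\underline{a}}:=\hat\tau(\underline{a})$, and $\tilde{a}\in\hat{B}$ any lift of $a$. Then the class of $$-\frac{1}{2}\,\frac{(\tilde{a}-\hat{\underline{a}})^3}{\hat{\underline{a}}^2(\hat{\underline{a}}-1)^2}$$ in $\hat{J}/\hat{J}^2$ is independent of the choice of the lift $\tilde a$, and it lies in the kernel of the map $\hat{J}/\hat{J}^2\to\Omega^1_{\hat{B}}/\hat{J}\Omega^1_{\hat{B}}$ induced by the (absolute) differential $d$.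
   Context: $A^\flat$ denotes the set of units $a\in A$ such that $1-a$ is also a unit. K\"ahler differentials are relative to $\mathbb{Q}$. *)

theory Defs
  imports "HOL-Algebra.Algebra"
begin

definition alg_finite_type :: "'r ring \<Rightarrow> 'a ring \<Rightarrow> ('r \<Rightarrow> 'a) \<Rightarrow> bool" where
  "alg_finite_type R A h \<longleftrightarrow>
     (\<exists>S. finite S \<and> S \<subseteq> carrier A \<and> carrier A = generate_ring A (h ` carrier R \<union> S))"

text \<open>Test algebras C are taken with carrier in the
  type ('a + 'r) list, which is large enough (every lifting problem reduces to one on a
  subring of cardinality at most |A| + |R| + aleph0).\<close>
definition formally_smooth :: "'r ring \<Rightarrow> 'a ring \<Rightarrow> ('r \<Rightarrow> 'a) \<Rightarrow> bool" where
  "formally_smooth R A h \<longleftrightarrow>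
     (\<forall>(C :: ('a + 'r) list ring) g N u.
        cring C \<and> g \<in> ring_hom R C \<and> ideal N C \<and>
        (\<forall>x\<in>N. \<forall>y\<in>N. x \<otimes>\<^bsub>C\<^esub> y = \<zero>\<^bsub>C\<^esub>) \<and>
        u \<in> ring_hom A (C Quot N) \<and>
        (\<forall>r\<in>carrier R. u (h r) = N +>\<^bsub>C\<^esub> g r)
        \<longrightarrow> (\<exists>v\<in>ring_hom A C. (\<forall>r\<in>carrier R. v (h r) = g r) \<and>
                                 (\<forall>x\<in>carrier A. N +>\<^bsub>C\<^esub> v x = u x)))"

text \<open>Smooth = finite type + formally smooth.  (All base rings occurring below are
  Noetherian, so finite type = finite presentation there.)\<close>
definition smooth_alg :: "'r ring \<Rightarrow> 'a ring \<Rightarrow> ('r \<Rightarrow> 'a) \<Rightarrow> bool" where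
  "smooth_alg R A h \<longleftrightarrow> alg_finite_type R A h \<and> formally_smooth R A h"

definition flat_units :: "'a ring \<Rightarrow> 'a set" where
  "flat_units A = {a \<in> Units A. \<one>\<^bsub>A\<^esub> \<ominus>\<^bsub>A\<^esub> a \<in> Units A}"

text \<open>ipow R K n is the ideal power K^(n+1).\<close>
fun ipow :: "'b ring \<Rightarrow> 'b set \<Rightarrow> nat \<Rightarrow> 'b set" where
  "ipow R K 0 = K"
| "ipow R K (Suc n) = K \<cdot>\<^bsub>R\<^esub> ipow R K n"

text \<open>The completion lim B/K^(n+1) as compatible sequences of cosets.\<close>
definition completion :: "'b ring \<Rightarrow> 'b set \<Rightarrow> (nat \<Rightarrow> 'b set) ring" where
  "completion B K = \<lparr>
     carrier = {f. (\<forall>n. f n \<in> carrier (B Quot ipow B K n)) \<and> (\<forall>n. f (Suc n) \<subseteq> f n)},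
     monoid.mult = (\<lambda>f g n. f n \<otimes>\<^bsub>B Quot ipow B K n\<^esub> g n),
     monoid.one = (\<lambda>n. \<one>\<^bsub>B Quot ipow B K n\<^esub>),
     ring.zero = (\<lambda>n. \<zero>\<^bsub>B Quot ipow B K n\<^esub>),
     ring.add = (\<lambda>f g n. f n \<oplus>\<^bsub>B Quot ipow B K n\<^esub> g n) \<rparr>"

definition compl_map :: "'b ring \<Rightarrow> 'b set \<Rightarrow> 'b \<Rightarrow> (nat \<Rightarrow> 'b set)" where
  "compl_map B K b = (\<lambda>n. ipow B K n +>\<^bsub>B\<^esub> b)"

definition compl_proj :: "('b \<Rightarrow> 'a) \<Rightarrow> (nat \<Rightarrow> 'b set) \<Rightarrow> 'a" where
  "compl_proj pr f = the_elem (pr ` f 0)"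

definition free_mod :: "'c ring \<Rightarrow> ('c \<Rightarrow> 'c) set" where
  "free_mod R = {\<phi>. finite {b. \<phi> b \<noteq> \<zero>\<^bsub>R\<^esub>} \<and> (\<forall>b. \<phi> b \<noteq> \<zero>\<^bsub>R\<^esub> \<longrightarrow> b \<in> carrier R)
                    \<and> (\<forall>b. \<phi> b \<in> carrier R)}"

definition fm_basis :: "'c ring \<Rightarrow> 'c \<Rightarrow> ('c \<Rightarrow> 'c)" where
  "fm_basis R b = (\<lambda>c. if c = b then \<one>\<^bsub>R\<^esub> else \<zero>\<^bsub>R\<^esub>)"

definition fm_add :: "'c ring \<Rightarrow> ('c \<Rightarrow> 'c) \<Rightarrow> ('c \<Rightarrow> 'c) \<Rightarrow> ('c \<Rightarrow> 'c)" where
  "fm_add R \<phi> \<psi> = (\<lambda>c. \<phi> c \<oplus>\<^bsub>R\<^esub> \<psi> c)"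

definition fm_smult :: "'c ring \<Rightarrow> 'c \<Rightarrow> ('c \<Rightarrow> 'c) \<Rightarrow> ('c \<Rightarrow> 'c)" where
  "fm_smult R r \<phi> = (\<lambda>c. r \<otimes>\<^bsub>R\<^esub> \<phi> c)"

definition fm_neg :: "'c ring \<Rightarrow> ('c \<Rightarrow> 'c) \<Rightarrow> ('c \<Rightarrow> 'c)" where
  "fm_neg R \<phi> = (\<lambda>c. \<ominus>\<^bsub>R\<^esub> \<phi> c)"

inductive_set fm_span :: "'c ring \<Rightarrow> ('c \<Rightarrow> 'c) set \<Rightarrow> ('c \<Rightarrow> 'c) set"
  for R S where
    zero: "(\<lambda>_. \<zero>\<^bsub>R\<^esub>) \<in> fm_span R S"
  | gen: "\<phi> \<in> S \<Longrightarrow> \<phi> \<in> fm_span R S"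
  | add: "\<phi> \<in> fm_span R S \<Longrightarrow> \<psi> \<in> fm_span R S \<Longrightarrow> fm_add R \<phi> \<psi> \<in> fm_span R S"
  | smult: "r \<in> carrier R \<Longrightarrow> \<phi> \<in> fm_span R S \<Longrightarrow> fm_smult R r \<phi> \<in> fm_span R S"

text \<open>Relations defining Omega^1_R = free_mod R / span(kaehler_rels R), with d b = class of
  fm_basis R b.  (For a Q-algebra R, additive derivations are automatically Q-linear.)\<close>
definition kaehler_rels :: "'c ring \<Rightarrow> ('c \<Rightarrow> 'c) set" where
  "kaehler_rels R =
     {fm_add R (fm_basis R (a \<oplus>\<^bsub>R\<^esub> b)) (fm_neg R (fm_add R (fm_basis R a) (fm_basis R b)))
       | a b. a \<in> carrier R \<and> b \<in> carrier R}
   \<union> {fm_add R (fm_basis R (a \<otimes>\<^bsub>R\<^esub> b))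
        (fm_neg R (fm_add R (fm_smult R a (fm_basis R b)) (fm_smult R b (fm_basis R a))))
       | a b. a \<in> carrier R \<and> b \<in> carrier R}"

text \<open>d x maps to zero in Omega^1_R / J Omega^1_R = free_mod R / (span(rels) + J free_mod R).\<close>
definition d_zero_mod :: "'c ring \<Rightarrow> 'c set \<Rightarrow> 'c \<Rightarrow> bool" where
  "d_zero_mod R J x \<longleftrightarrow>
     fm_basis R x \<in> fm_span R (kaehler_rels R \<union> {fm_smult R j \<phi> | j \<phi>. j \<in> J \<and> \<phi> \<in> free_mod R})"

end

theory Submission
  imports Defs
begin


lemma ipow_ideal: assumes "cring B" "ideal K B" shows "ideal (ipow B K n) B"
proof (induction n)
  case 0 then show ?case using assms by simp
next
  case (Suc n) then show ?case using assms
    by (simp add: cring.axioms(1) ring.ideal_prod_is_ideal)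
qed

lemma ipow_Suc_sub: assumes "cring B" "ideal K B" shows "ipow B K (Suc n) \<subseteq> ipow B K n"
  using ring.ideal_prod_inter[OF cring.axioms(1)[OF assms(1)] assms(2) ipow_ideal[OF assms, of n]] by auto

lemma ideal_abs: assumes "cring B" "ideal I B" shows "abelian_subgroup I B"
  using assms by (meson abelian_group_def abelian_subgroupI3 cring.axioms(1) ideal.axioms(1) ring.axioms(1))

lemma quot_carrier: assumes "ideal I R" shows "carrier (R Quot I) = {I +>\<^bsub>R\<^esub> x | x. x \<in> carrier R}"
  unfolding FactRing_def A_RCOSETS_def' by auto

definition cpt :: "'b ring \<Rightarrow> 'b set \<Rightarrow> (nat \<Rightarrow> 'b) \<Rightarrow> nat \<Rightarrow> 'b set" where
  "cpt B K x = (\<lambda>n. ipow B K n +>\<^bsub>B\<^esub> x n)"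

definition cpt_compat :: "'b ring \<Rightarrow> 'b set \<Rightarrow> (nat \<Rightarrow> 'b) \<Rightarrow> bool" where
  "cpt_compat B K x \<longleftrightarrow> (\<forall>n. x n \<in> carrier B) \<and>
     (\<forall>n. ipow B K n +>\<^bsub>B\<^esub> x (Suc n) = ipow B K n +>\<^bsub>B\<^esub> x n)"

lemma coset_sub:
  assumes "cring B" "ideal I' B" "ideal I B" "I' \<subseteq> I" "x \<in> carrier B" "y \<in> carrier B"
  shows "(I' +>\<^bsub>B\<^esub> x \<subseteq> I +>\<^bsub>B\<^esub> y) \<longleftrightarrow> I +>\<^bsub>B\<^esub> x = I +>\<^bsub>B\<^esub> y"
proof
  assume h: "I' +>\<^bsub>B\<^esub> x \<subseteq> I +>\<^bsub>B\<^esub> y"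
  have "x \<in> I' +>\<^bsub>B\<^esub> x" using abelian_subgroup.a_rcos_self[OF ideal_abs[OF assms(1,2)] assms(5)] .
  then have "x \<in> I +>\<^bsub>B\<^esub> y" using h by auto
  then show "I +>\<^bsub>B\<^esub> x = I +>\<^bsub>B\<^esub> y"
    using abelian_subgroup.a_repr_independence'[OF ideal_abs[OF assms(1,3)] _ assms(6)] by auto
next
  assume h: "I +>\<^bsub>B\<^esub> x = I +>\<^bsub>B\<^esub> y"
  have "I' +>\<^bsub>B\<^esub> x \<subseteq> I +>\<^bsub>B\<^esub> x" using assms(4) unfolding a_r_coset_def r_coset_def by auto
  then show "I' +>\<^bsub>B\<^esub> x \<subseteq> I +>\<^bsub>B\<^esub> y" using h by simp
qed

lemma carrier_completion:
  assumes "cring B" "ideal K B"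
  shows "carrier (completion B K) = {cpt B K x | x. cpt_compat B K x}"
proof -
  show ?thesis proof (rule Set.set_eqI)
  fix f show "f \<in> carrier (completion B K) \<longleftrightarrow> f \<in> {cpt B K x | x. cpt_compat B K x}" proof
  fix f assume "f \<in> carrier (completion B K)"
  then have f1: "\<forall>n. f n \<in> carrier (B Quot ipow B K n)" and f2: "\<forall>n. f (Suc n) \<subseteq> f n"
    unfolding completion_def by auto
  have "\<forall>n. \<exists>x. x \<in> carrier B \<and> f n = ipow B K n +>\<^bsub>B\<^esub> x"
    using f1 quot_carrier[OF ipow_ideal[OF assms]] by blast
  then obtain x where x: "\<And>n. x n \<in> carrier B \<and> f n = ipow B K n +>\<^bsub>B\<^esub> x n" by metis
  have "cpt_compat B K x" unfolding cpt_compat_def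
    using x f2 coset_sub[OF assms(1) ipow_ideal[OF assms] ipow_ideal[OF assms] ipow_Suc_sub[OF assms]] by metis
  moreover have "f = cpt B K x" using x unfolding cpt_def by auto
  ultimately show "f \<in> {cpt B K x | x. cpt_compat B K x}" by blast
next
  fix f assume "f \<in> {cpt B K x | x. cpt_compat B K x}"
  then obtain x where f: "f = cpt B K x" and c: "cpt_compat B K x" by blast
  show "f \<in> carrier (completion B K)" unfolding completion_def
    using c quot_carrier[OF ipow_ideal[OF assms]]
      coset_sub[OF assms(1) ipow_ideal[OF assms] ipow_ideal[OF assms] ipow_Suc_sub[OF assms]]
    unfolding f cpt_def cpt_compat_def by auto
qed qed qed


locale cpl = fixes B :: "'b ring" and K :: "'b set"
  assumes cB: "cring B" and iK: "ideal K B"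
begin

interpretation B: cring B by (rule cB)

lemma hom_n: "ring_hom_ring B (B Quot ipow B K n) ((+>\<^bsub>B\<^esub>) (ipow B K n))"
  by (rule ideal.rcos_ring_hom_ring[OF ipow_ideal[OF cB iK]])

lemma hom_n': "((+>\<^bsub>B\<^esub>) (ipow B K n)) \<in> ring_hom B (B Quot ipow B K n)"
  by (rule ideal.rcos_ring_hom[OF ipow_ideal[OF cB iK]])

lemma crq: "cring (B Quot ipow B K n)"
  by (rule ideal.quotient_is_cring[OF ipow_ideal[OF cB iK] cB])

lemma hn_mult: "x \<in> carrier B \<Longrightarrow> y \<in> carrier B \<Longrightarrow>
  ipow B K n +>\<^bsub>B\<^esub> (x \<otimes>\<^bsub>B\<^esub> y) = (ipow B K n +>\<^bsub>B\<^esub> x) \<otimes>\<^bsub>B Quot ipow B K n\<^esub> (ipow B K n +>\<^bsub>B\<^esub> y)"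
  by (rule ring_hom_mult[OF hom_n'])
lemma hn_add: "x \<in> carrier B \<Longrightarrow> y \<in> carrier B \<Longrightarrow>
  ipow B K n +>\<^bsub>B\<^esub> (x \<oplus>\<^bsub>B\<^esub> y) = (ipow B K n +>\<^bsub>B\<^esub> x) \<oplus>\<^bsub>B Quot ipow B K n\<^esub> (ipow B K n +>\<^bsub>B\<^esub> y)"
  by (rule ring_hom_add[OF hom_n'])
lemma hn_one: "ipow B K n +>\<^bsub>B\<^esub> \<one>\<^bsub>B\<^esub> = \<one>\<^bsub>B Quot ipow B K n\<^esub>"
  by (rule ring_hom_one[OF hom_n'])
lemma hn_zero: "ipow B K n +>\<^bsub>B\<^esub> \<zero>\<^bsub>B\<^esub> = \<zero>\<^bsub>B Quot ipow B K n\<^esub>"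
  by (rule ring_hom_zero[OF hom_n']) (auto simp: cB cring.axioms(1) crq)
lemma hn_neg: "x \<in> carrier B \<Longrightarrow>
  ipow B K n +>\<^bsub>B\<^esub> (\<ominus>\<^bsub>B\<^esub> x) = \<ominus>\<^bsub>B Quot ipow B K n\<^esub> (ipow B K n +>\<^bsub>B\<^esub> x)"
proof -
  interpret H: ring_hom_ring B "B Quot ipow B K n" "(+>\<^bsub>B\<^esub>) (ipow B K n)" by (rule hom_n)
  assume "x \<in> carrier B" then show ?thesis by simp
qed

lemma compatD: "cpt_compat B K x \<Longrightarrow> x n \<in> carrier B"
  unfolding cpt_compat_def by auto

lemma compatE: "cpt_compat B K x \<Longrightarrow> ipow B K n +>\<^bsub>B\<^esub> x (Suc n) = ipow B K n +>\<^bsub>B\<^esub> x n"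
  unfolding cpt_compat_def by auto

lemma cpt_cong: "(\<And>n. x n = y n) \<Longrightarrow> cpt B K x = cpt B K y"
  unfolding cpt_def by auto

lemma cpt_mult: assumes "cpt_compat B K x" "cpt_compat B K y"
  shows "cpt B K x \<otimes>\<^bsub>completion B K\<^esub> cpt B K y = cpt B K (\<lambda>n. x n \<otimes>\<^bsub>B\<^esub> y n)"
    and "cpt_compat B K (\<lambda>n. x n \<otimes>\<^bsub>B\<^esub> y n)"
proof -
  note cx = compatD[OF assms(1)] and cy = compatD[OF assms(2)]
  show "cpt B K x \<otimes>\<^bsub>completion B K\<^esub> cpt B K y = cpt B K (\<lambda>n. x n \<otimes>\<^bsub>B\<^esub> y n)"
    unfolding cpt_def completion_def by (simp add: hn_mult cx cy)
  show "cpt_compat B K (\<lambda>n. x n \<otimes>\<^bsub>B\<^esub> y n)" unfolding cpt_compat_def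
    by (simp add: hn_mult cx cy compatE[OF assms(1)] compatE[OF assms(2)])
qed

lemma cpt_add: assumes "cpt_compat B K x" "cpt_compat B K y"
  shows "cpt B K x \<oplus>\<^bsub>completion B K\<^esub> cpt B K y = cpt B K (\<lambda>n. x n \<oplus>\<^bsub>B\<^esub> y n)"
    and "cpt_compat B K (\<lambda>n. x n \<oplus>\<^bsub>B\<^esub> y n)"
proof -
  note cx = compatD[OF assms(1)] and cy = compatD[OF assms(2)]
  show "cpt B K x \<oplus>\<^bsub>completion B K\<^esub> cpt B K y = cpt B K (\<lambda>n. x n \<oplus>\<^bsub>B\<^esub> y n)"
    unfolding cpt_def completion_def by (simp add: hn_add cx cy)
  show "cpt_compat B K (\<lambda>n. x n \<oplus>\<^bsub>B\<^esub> y n)" unfolding cpt_compat_def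
    by (simp add: hn_add cx cy compatE[OF assms(1)] compatE[OF assms(2)])
qed

lemma cpt_neg: assumes "cpt_compat B K x"
  shows "cpt_compat B K (\<lambda>n. \<ominus>\<^bsub>B\<^esub> x n)"
proof -
  note cx = compatD[OF assms(1)]
  show "cpt_compat B K (\<lambda>n. \<ominus>\<^bsub>B\<^esub> x n)" unfolding cpt_compat_def
    by (simp add: hn_neg cx compatE[OF assms(1)])
qed

lemma cpt_one: "\<one>\<^bsub>completion B K\<^esub> = cpt B K (\<lambda>n. \<one>\<^bsub>B\<^esub>)" "cpt_compat B K (\<lambda>n. \<one>\<^bsub>B\<^esub>)"
  unfolding cpt_def completion_def cpt_compat_def by (auto simp: hn_one)

lemma cpt_zero: "\<zero>\<^bsub>completion B K\<^esub> = cpt B K (\<lambda>n. \<zero>\<^bsub>B\<^esub>)" "cpt_compat B K (\<lambda>n. \<zero>\<^bsub>B\<^esub>)"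
  unfolding cpt_def completion_def cpt_compat_def by (auto simp: hn_zero)

lemma carr: "carrier (completion B K) = {cpt B K x | x. cpt_compat B K x}"
  by (rule carrier_completion[OF cB iK])

lemma cring_completion: "cring (completion B K)"
proof (rule cringI)
  show "abelian_group (completion B K)"
  proof (rule abelian_groupI)
    fix x y assume "x \<in> carrier (completion B K)" "y \<in> carrier (completion B K)"
    then show "x \<oplus>\<^bsub>completion B K\<^esub> y \<in> carrier (completion B K)"
      unfolding carr using cpt_add by blast
  next
    show "\<zero>\<^bsub>completion B K\<^esub> \<in> carrier (completion B K)" unfolding carr using cpt_zero by blast
  next
    fix x y z assume "x \<in> carrier (completion B K)" "y \<in> carrier (completion B K)" "z \<in> carrier (completion B K)"
    then obtain a b c where xyz: "x = cpt B K a" "y = cpt B K b" "z = cpt B K c" and abc: "cpt_compat B K a" "cpt_compat B K b" "cpt_compat B K c"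
      unfolding carr by blast
    show "x \<oplus>\<^bsub>completion B K\<^esub> y \<oplus>\<^bsub>completion B K\<^esub> z = x \<oplus>\<^bsub>completion B K\<^esub> (y \<oplus>\<^bsub>completion B K\<^esub> z)"
      unfolding xyz cpt_add(1)[OF abc(1,2)] cpt_add(1)[OF abc(2,3)] cpt_add(1)[OF cpt_add(2)[OF abc(1,2)] abc(3)] cpt_add(1)[OF abc(1) cpt_add(2)[OF abc(2,3)]]
      by (rule cpt_cong) (simp add: B.a_assoc compatD[OF abc(1)] compatD[OF abc(2)] compatD[OF abc(3)])
  next
    fix x y assume "x \<in> carrier (completion B K)" "y \<in> carrier (completion B K)"
    then obtain a b where xyz: "x = cpt B K a" "y = cpt B K b" and abc: "cpt_compat B K a" "cpt_compat B K b"
      unfolding carr by blast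
    show "x \<oplus>\<^bsub>completion B K\<^esub> y = y \<oplus>\<^bsub>completion B K\<^esub> x"
      unfolding xyz cpt_add(1)[OF abc(1,2)] cpt_add(1)[OF abc(2,1)]
      by (rule cpt_cong) (simp add: B.a_comm compatD[OF abc(1)] compatD[OF abc(2)])
  next
    fix x assume "x \<in> carrier (completion B K)"
    then obtain a where xyz: "x = cpt B K a" and abc: "cpt_compat B K a"
      unfolding carr by blast
    show "\<zero>\<^bsub>completion B K\<^esub> \<oplus>\<^bsub>completion B K\<^esub> x = x"
      unfolding xyz cpt_zero(1) cpt_add(1)[OF cpt_zero(2) abc]
      by (rule cpt_cong) (simp add: compatD[OF abc(1)])
  next
    fix x assume "x \<in> carrier (completion B K)"
    then obtain a where xyz: "x = cpt B K a" and abc: "cpt_compat B K a"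
      unfolding carr by blast
    have "cpt B K (\<lambda>n. \<ominus>\<^bsub>B\<^esub> a n) \<oplus>\<^bsub>completion B K\<^esub> x = \<zero>\<^bsub>completion B K\<^esub>"
      unfolding xyz cpt_zero(1) cpt_add(1)[OF cpt_neg abc, OF abc]
      by (rule cpt_cong) (simp add: compatD[OF abc(1)] B.l_neg)
    then show "\<exists>y\<in>carrier (completion B K). y \<oplus>\<^bsub>completion B K\<^esub> x = \<zero>\<^bsub>completion B K\<^esub>"
      unfolding carr using cpt_neg[OF abc] by blast
  qed
next
  show "comm_monoid (completion B K)"
  proof (rule comm_monoidI)
    fix x y assume "x \<in> carrier (completion B K)" "y \<in> carrier (completion B K)"
    then show "x \<otimes>\<^bsub>completion B K\<^esub> y \<in> carrier (completion B K)"
      unfolding carr using cpt_mult by blast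
  next
    show "\<one>\<^bsub>completion B K\<^esub> \<in> carrier (completion B K)" unfolding carr using cpt_one by blast
  next
    fix x y z assume "x \<in> carrier (completion B K)" "y \<in> carrier (completion B K)" "z \<in> carrier (completion B K)"
    then obtain a b c where xyz: "x = cpt B K a" "y = cpt B K b" "z = cpt B K c" and abc: "cpt_compat B K a" "cpt_compat B K b" "cpt_compat B K c"
      unfolding carr by blast
    show "x \<otimes>\<^bsub>completion B K\<^esub> y \<otimes>\<^bsub>completion B K\<^esub> z = x \<otimes>\<^bsub>completion B K\<^esub> (y \<otimes>\<^bsub>completion B K\<^esub> z)"
      unfolding xyz cpt_mult(1)[OF abc(1,2)] cpt_mult(1)[OF abc(2,3)] cpt_mult(1)[OF cpt_mult(2)[OF abc(1,2)] abc(3)] cpt_mult(1)[OF abc(1) cpt_mult(2)[OF abc(2,3)]]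
      by (rule cpt_cong) (simp add: B.m_assoc compatD[OF abc(1)] compatD[OF abc(2)] compatD[OF abc(3)])
  next
    fix x y assume "x \<in> carrier (completion B K)" "y \<in> carrier (completion B K)"
    then obtain a b where xyz: "x = cpt B K a" "y = cpt B K b" and abc: "cpt_compat B K a" "cpt_compat B K b"
      unfolding carr by blast
    show "x \<otimes>\<^bsub>completion B K\<^esub> y = y \<otimes>\<^bsub>completion B K\<^esub> x"
      unfolding xyz cpt_mult(1)[OF abc(1,2)] cpt_mult(1)[OF abc(2,1)]
      by (rule cpt_cong) (simp add: B.m_comm compatD[OF abc(1)] compatD[OF abc(2)])
  next
    fix x assume "x \<in> carrier (completion B K)"
    then obtain a where xyz: "x = cpt B K a" and abc: "cpt_compat B K a"
      unfolding carr by blast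
    show "\<one>\<^bsub>completion B K\<^esub> \<otimes>\<^bsub>completion B K\<^esub> x = x"
      unfolding xyz cpt_one(1) cpt_mult(1)[OF cpt_one(2) abc]
      by (rule cpt_cong) (simp add: compatD[OF abc(1)])
  qed
next
  fix x y z assume "x \<in> carrier (completion B K)" "y \<in> carrier (completion B K)" "z \<in> carrier (completion B K)"
  then obtain a b c where xyz: "x = cpt B K a" "y = cpt B K b" "z = cpt B K c" and abc: "cpt_compat B K a" "cpt_compat B K b" "cpt_compat B K c"
    unfolding carr by blast
  show "(x \<oplus>\<^bsub>completion B K\<^esub> y) \<otimes>\<^bsub>completion B K\<^esub> z = x \<otimes>\<^bsub>completion B K\<^esub> z \<oplus>\<^bsub>completion B K\<^esub> y \<otimes>\<^bsub>completion B K\<^esub> z"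
    unfolding xyz cpt_add(1)[OF abc(1,2)] cpt_mult(1)[OF cpt_add(2)[OF abc(1,2)] abc(3)] cpt_mult(1)[OF abc(1,3)] cpt_mult(1)[OF abc(2,3)]
      cpt_add(1)[OF cpt_mult(2)[OF abc(1,3)] cpt_mult(2)[OF abc(2,3)]]
    by (rule cpt_cong) (simp add: B.l_distr compatD[OF abc(1)] compatD[OF abc(2)] compatD[OF abc(3)])
qed

lemma compl_map_hom: "compl_map B K \<in> ring_hom B (completion B K)"
proof -
  have c: "\<And>b. b \<in> carrier B \<Longrightarrow> cpt_compat B K (\<lambda>n. b)" unfolding cpt_compat_def by auto
  have e: "\<And>b. compl_map B K b = cpt B K (\<lambda>n. b)" unfolding compl_map_def cpt_def by auto
  show ?thesis
    apply (rule ring_hom_memI)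
    subgoal for x unfolding carr e using c by blast
    subgoal for x y unfolding e using cpt_mult[OF c c] by simp
    subgoal for x y unfolding e using cpt_add[OF c c] by simp
    subgoal unfolding e using cpt_one by simp
    done
qed

end



context fixes R :: "'a ring" assumes cR: "cring R"
begin
interpretation R: cring R by (rule cR)


lemma fm_basis_free: "b \<in> carrier R \<Longrightarrow> fm_basis R b \<in> free_mod R"
proof -
  assume b: "b \<in> carrier R"
  have "{c. fm_basis R b c \<noteq> \<zero>\<^bsub>R\<^esub>} \<subseteq> {b}" unfolding fm_basis_def by auto
  then have "finite {c. fm_basis R b c \<noteq> \<zero>\<^bsub>R\<^esub>}" using finite_subset by blast
  then show ?thesis unfolding free_mod_def fm_basis_def using b by auto
qed

lemma fm_basis_carr: "fm_basis R b c \<in> carrier R"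
  unfolding fm_basis_def by auto

lemma leib:
  assumes p: "p \<in> carrier R" and q: "q \<in> carrier R"
  shows "fm_basis R (p \<otimes>\<^bsub>R\<^esub> q) = fm_add R
     (fm_add R (fm_basis R (p \<otimes>\<^bsub>R\<^esub> q)) (fm_neg R (fm_add R (fm_smult R p (fm_basis R q)) (fm_smult R q (fm_basis R p)))))
     (fm_add R (fm_smult R p (fm_basis R q)) (fm_smult R q (fm_basis R p)))"
proof (rule ext)
  fix c
  have u: "fm_basis R (p \<otimes>\<^bsub>R\<^esub> q) c \<in> carrier R" by (rule fm_basis_carr)
  have v: "p \<otimes>\<^bsub>R\<^esub> fm_basis R q c \<oplus>\<^bsub>R\<^esub> q \<otimes>\<^bsub>R\<^esub> fm_basis R p c \<in> carrier R" using p q fm_basis_carr by simp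
  show "fm_basis R (p \<otimes>\<^bsub>R\<^esub> q) c = fm_add R
     (fm_add R (fm_basis R (p \<otimes>\<^bsub>R\<^esub> q)) (fm_neg R (fm_add R (fm_smult R p (fm_basis R q)) (fm_smult R q (fm_basis R p)))))
     (fm_add R (fm_smult R p (fm_basis R q)) (fm_smult R q (fm_basis R p))) c"
    unfolding fm_add_def fm_neg_def fm_smult_def using u v by (simp add: R.a_assoc R.l_neg)
qed

lemma dzero:
  assumes J: "ideal J R" and y: "y \<in> carrier R" and yy: "y \<otimes>\<^bsub>R\<^esub> y \<in> J" and C: "C \<in> carrier R"
  shows "d_zero_mod R J ((y \<otimes>\<^bsub>R\<^esub> y \<otimes>\<^bsub>R\<^esub> y) \<otimes>\<^bsub>R\<^esub> C)"
proof -
  define G where "G = kaehler_rels R \<union> {fm_smult R j \<phi> | j \<phi>. j \<in> J \<and> \<phi> \<in> free_mod R}"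
  define S where "S = fm_span R G"
  have rel: "\<And>p q. p \<in> carrier R \<Longrightarrow> q \<in> carrier R \<Longrightarrow>
     fm_add R (fm_basis R (p \<otimes>\<^bsub>R\<^esub> q)) (fm_neg R (fm_add R (fm_smult R p (fm_basis R q)) (fm_smult R q (fm_basis R p)))) \<in> S"
    unfolding S_def G_def kaehler_rels_def by (rule fm_span.gen) blast
  have gen: "\<And>j b. j \<in> J \<Longrightarrow> b \<in> carrier R \<Longrightarrow> fm_smult R j (fm_basis R b) \<in> S"
    unfolding S_def G_def by (rule fm_span.gen) (blast intro: fm_basis_free)
  have add: "\<And>\<phi> \<psi>. \<phi> \<in> S \<Longrightarrow> \<psi> \<in> S \<Longrightarrow> fm_add R \<phi> \<psi> \<in> S"
    unfolding S_def by (rule fm_span.add)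
  have sm: "\<And>r \<phi>. r \<in> carrier R \<Longrightarrow> \<phi> \<in> S \<Longrightarrow> fm_smult R r \<phi> \<in> S"
    unfolding S_def by (rule fm_span.smult)
  have JR: "J \<subseteq> carrier R" using J ideal.axioms(1) additive_subgroup.a_subset by blast
  have Y: "y \<otimes>\<^bsub>R\<^esub> y \<otimes>\<^bsub>R\<^esub> y \<in> J" using ideal.I_r_closed[OF J yy y] .
  note yyc = subsetD[OF JR yy] and Yc = subsetD[OF JR Y]
  define r1 where "r1 = fm_add R (fm_basis R (y \<otimes>\<^bsub>R\<^esub> y)) (fm_neg R (fm_add R (fm_smult R y (fm_basis R y)) (fm_smult R y (fm_basis R y))))"
  have r1: "r1 \<in> S" unfolding r1_def using rel[OF y y] .
  have "fm_smult R y (fm_basis R (y \<otimes>\<^bsub>R\<^esub> y)) =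
      fm_add R (fm_smult R y r1) (fm_add R (fm_smult R (y \<otimes>\<^bsub>R\<^esub> y) (fm_basis R y)) (fm_smult R (y \<otimes>\<^bsub>R\<^esub> y) (fm_basis R y)))"
  proof (rule ext)
    fix c
    have rc: "r1 c \<in> carrier R" unfolding r1_def fm_add_def fm_neg_def fm_smult_def using y fm_basis_carr by simp
    have e: "fm_basis R (y \<otimes>\<^bsub>R\<^esub> y) c = r1 c \<oplus>\<^bsub>R\<^esub> (y \<otimes>\<^bsub>R\<^esub> fm_basis R y c \<oplus>\<^bsub>R\<^esub> y \<otimes>\<^bsub>R\<^esub> fm_basis R y c)"
      using fun_cong[OF leib[OF y y], of c] unfolding r1_def fm_add_def fm_smult_def by simp
    show "fm_smult R y (fm_basis R (y \<otimes>\<^bsub>R\<^esub> y)) c =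
      fm_add R (fm_smult R y r1) (fm_add R (fm_smult R (y \<otimes>\<^bsub>R\<^esub> y) (fm_basis R y)) (fm_smult R (y \<otimes>\<^bsub>R\<^esub> y) (fm_basis R y))) c"
      unfolding fm_smult_def fm_add_def e using rc y fm_basis_carr by (simp add: R.r_distr R.m_assoc)
  qed
  also have "\<dots> \<in> S" using add[OF sm[OF y r1] add[OF gen[OF yy y] gen[OF yy y]]] .
  finally have s1: "fm_smult R y (fm_basis R (y \<otimes>\<^bsub>R\<^esub> y)) \<in> S" .
  have s2: "fm_basis R (y \<otimes>\<^bsub>R\<^esub> y \<otimes>\<^bsub>R\<^esub> y) \<in> S"
    apply (subst leib[OF yyc y])
    using add[OF rel[OF yyc y] add[OF gen[OF yy y] s1]] .
  have "fm_basis R ((y \<otimes>\<^bsub>R\<^esub> y \<otimes>\<^bsub>R\<^esub> y) \<otimes>\<^bsub>R\<^esub> C) \<in> S"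
    apply (subst leib[OF Yc C])
    using add[OF rel[OF Yc C] add[OF gen[OF Y C] sm[OF C s2]]] .
  then show ?thesis unfolding d_zero_mod_def S_def G_def by simp
qed


lemma cube_id:
  assumes y: "y \<in> carrier R" and e: "e \<in> carrier R"
  shows "(y \<oplus>\<^bsub>R\<^esub> e) \<otimes>\<^bsub>R\<^esub> (y \<oplus>\<^bsub>R\<^esub> e) \<otimes>\<^bsub>R\<^esub> (y \<oplus>\<^bsub>R\<^esub> e) =
    y \<otimes>\<^bsub>R\<^esub> y \<otimes>\<^bsub>R\<^esub> y \<oplus>\<^bsub>R\<^esub> e \<otimes>\<^bsub>R\<^esub> ((y \<oplus>\<^bsub>R\<^esub> e) \<otimes>\<^bsub>R\<^esub> (y \<oplus>\<^bsub>R\<^esub> e) \<oplus>\<^bsub>R\<^esub> (y \<oplus>\<^bsub>R\<^esub> e) \<otimes>\<^bsub>R\<^esub> y \<oplus>\<^bsub>R\<^esub> y \<otimes>\<^bsub>R\<^esub> y)"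
  using y e by (simp add: R.r_distr R.l_distr R.m_ac R.a_ac)

lemma diff_cancel:
  assumes "a \<in> carrier R" "b \<in> carrier R" "c \<in> carrier R"
  shows "\<ominus>\<^bsub>R\<^esub> a \<oplus>\<^bsub>R\<^esub> (a \<oplus>\<^bsub>R\<^esub> b) = b"
  using assms by (simp add: R.a_assoc[symmetric] R.l_neg)

end


lemma hom_units: "h \<in> ring_hom R S \<Longrightarrow> u \<in> Units R \<Longrightarrow> h u \<in> Units S"
proof -
  assume h: "h \<in> ring_hom R S" and u: "u \<in> Units R"
  then obtain v where v: "v \<in> carrier R" "v \<otimes>\<^bsub>R\<^esub> u = \<one>\<^bsub>R\<^esub>" "u \<otimes>\<^bsub>R\<^esub> v = \<one>\<^bsub>R\<^esub>" and uc: "u \<in> carrier R"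
    unfolding Units_def by auto
  have "h v \<otimes>\<^bsub>S\<^esub> h u = \<one>\<^bsub>S\<^esub>" "h u \<otimes>\<^bsub>S\<^esub> h v = \<one>\<^bsub>S\<^esub>"
    using v uc ring_hom_mult[OF h] ring_hom_one[OF h] by metis+
  then show ?thesis unfolding Units_def using ring_hom_closed[OF h] v uc by blast
qed

lemma proj_cpt:
  assumes cB: "cring B" and cA: "cring A" and pr: "pr \<in> ring_hom B A"
    and Kb: "Kb = {b \<in> carrier B. pr b = \<zero>\<^bsub>A\<^esub>}" and x: "cpt_compat B Kb x"
  shows "compl_proj pr (cpt B Kb x) = pr (x 0)"
proof -
  interpret A: cring A by (rule cA)
  interpret B: cring B by (rule cB)
  have x0: "x 0 \<in> carrier B" using x unfolding cpt_compat_def by auto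
  have z: "\<zero>\<^bsub>B\<^esub> \<in> Kb" unfolding Kb using ring_hom_zero[OF pr] by (simp add: A.ring_axioms B.ring_axioms)
  have "pr ` (Kb +>\<^bsub>B\<^esub> x 0) = {pr (x 0)}"
  proof -
    have "pr (h \<oplus>\<^bsub>B\<^esub> x 0) = pr (x 0)" if "h \<in> Kb" for h
      using that x0 ring_hom_add[OF pr] ring_hom_closed[OF pr] unfolding Kb by simp
    moreover have "\<zero>\<^bsub>B\<^esub> \<oplus>\<^bsub>B\<^esub> x 0 \<in> Kb +>\<^bsub>B\<^esub> x 0"
      using z unfolding a_r_coset_def r_coset_def by auto
    ultimately show ?thesis unfolding a_r_coset_def r_coset_def using x0 by force
  qed
  then show ?thesis unfolding compl_proj_def cpt_def by simp
qed

theorem proposition3p2: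
  fixes K :: "'k ring" and A :: "'a ring" and B :: "'b ring"
    and iA :: "'k \<Rightarrow> 'a" and I :: "'a set"
    and tau :: "'a set \<Rightarrow> 'a" and sigma :: "'a set \<Rightarrow> 'b" and pr :: "'b \<Rightarrow> 'a"
    and a :: 'a
  assumes field_K: "field K"
    and char0: "\<forall>n::nat. n > 0 \<longrightarrow> add_pow K n \<one>\<^bsub>K\<^esub> \<noteq> \<zero>\<^bsub>K\<^esub>"
    and cring_A: "cring A" and iA_hom: "iA \<in> ring_hom K A"
    and ideal_I: "ideal I A" and I_sq: "\<forall>x\<in>I. \<forall>y\<in>I. x \<otimes>\<^bsub>A\<^esub> y = \<zero>\<^bsub>A\<^esub>"
    and A_smooth: "smooth_alg K (A Quot I) (\<lambda>c. I +>\<^bsub>A\<^esub> iA c)"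
    and tau_hom: "tau \<in> ring_hom (A Quot I) A"
    and tau_k: "\<forall>c\<in>carrier K. tau (I +>\<^bsub>A\<^esub> iA c) = iA c"
    and tau_split: "\<forall>u\<in>carrier (A Quot I). I +>\<^bsub>A\<^esub> tau u = u"
    and cring_B: "cring B" and sigma_hom: "sigma \<in> ring_hom (A Quot I) B"
    and B_smooth: "smooth_alg (A Quot I) B sigma"
    and pi_hom: "pr \<in> ring_hom B A" and pi_surj: "pr ` carrier B = carrier A"
    and pi_alg: "\<forall>u\<in>carrier (A Quot I). pr (sigma u) = tau u"
    and a_flat: "a \<in> flat_units A"
  defines "Kb \<equiv> {b \<in> carrier B. pr b = \<zero>\<^bsub>A\<^esub>}"
  defines "Bh \<equiv> completion B Kb"
  defines "Jh \<equiv> {f \<in> carrier Bh. compl_proj pr f = \<zero>\<^bsub>A\<^esub>}"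
  defines "ah \<equiv> compl_map B Kb (sigma (I +>\<^bsub>A\<^esub> a))"
  defines "xv \<equiv> (\<lambda>t. \<ominus>\<^bsub>Bh\<^esub> (m_inv Bh (\<one>\<^bsub>Bh\<^esub> \<oplus>\<^bsub>Bh\<^esub> \<one>\<^bsub>Bh\<^esub>)
                     \<otimes>\<^bsub>Bh\<^esub> (t \<ominus>\<^bsub>Bh\<^esub> ah) [^]\<^bsub>Bh\<^esub> (3::nat)
                     \<otimes>\<^bsub>Bh\<^esub> m_inv Bh (ah [^]\<^bsub>Bh\<^esub> (2::nat)
                        \<otimes>\<^bsub>Bh\<^esub> (ah \<ominus>\<^bsub>Bh\<^esub> \<one>\<^bsub>Bh\<^esub>) [^]\<^bsub>Bh\<^esub> (2::nat))))"
  shows "(\<forall>t1\<in>carrier Bh. \<forall>t2\<in>carrier Bh. compl_proj pr t1 = a \<longrightarrow> compl_proj pr t2 = a \<longrightarrow>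
            xv t1 \<ominus>\<^bsub>Bh\<^esub> xv t2 \<in> Jh \<cdot>\<^bsub>Bh\<^esub> Jh)
       \<and> (\<forall>t\<in>carrier Bh. compl_proj pr t = a \<longrightarrow> xv t \<in> Jh \<and> d_zero_mod Bh Jh (xv t))"
  proof -
  interpret A: cring A by (rule cring_A)
  interpret B: cring B by (rule cring_B)
  interpret Kf: field K by (rule field_K)
  have iI: "ideal I A" by (rule ideal_I)
  define Q where "Q = A Quot I"
  interpret Q: cring Q unfolding Q_def by (rule ideal.quotient_is_cring[OF ideal_I cring_A])
  have hq: "(+>\<^bsub>A\<^esub>) I \<in> ring_hom A Q" unfolding Q_def by (rule ideal.rcos_ring_hom[OF ideal_I])
  have Kb_ker: "Kb = a_kernel B A pr" unfolding Kb_def a_kernel_def' by simp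
  have prr: "ring_hom_ring B A pr" by (rule ring_hom_ringI2[OF B.ring_axioms A.ring_axioms pi_hom])
  have iKb: "ideal Kb B" unfolding Kb_ker by (rule ring_hom_ring.kernel_is_ideal[OF prr])
  interpret C: cpl B Kb unfolding cpl_def using cring_B iKb by blast
  interpret Bh: cring Bh unfolding Bh_def by (rule C.cring_completion)
  have cm: "compl_map B Kb \<in> ring_hom B Bh" unfolding Bh_def by (rule C.compl_map_hom)
  have cm_cpt: "\<And>b. compl_map B Kb b = cpt B Kb (\<lambda>n. b)" unfolding compl_map_def cpt_def by auto
  have cc: "\<And>b. b \<in> carrier B \<Longrightarrow> cpt_compat B Kb (\<lambda>n. b)" unfolding cpt_compat_def by auto
  have pcpt: "\<And>x. cpt_compat B Kb x \<Longrightarrow> compl_proj pr (cpt B Kb x) = pr (x 0)"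
    by (rule proj_cpt[OF cring_B cring_A pi_hom Kb_def[THEN meta_eq_to_obj_eq]])
  have proj_cm: "\<And>b. b \<in> carrier B \<Longrightarrow> compl_proj pr (compl_map B Kb b) = pr b"
    using cm_cpt pcpt cc by simp
  have carrBh: "carrier Bh = {cpt B Kb x | x. cpt_compat B Kb x}" unfolding Bh_def by (rule C.carr)
  have proj_hom: "compl_proj pr \<in> ring_hom Bh A"
  proof (rule ring_hom_memI)
    fix x assume "x \<in> carrier Bh"
    then obtain u where "x = cpt B Kb u" "cpt_compat B Kb u" unfolding carrBh by blast
    then show "compl_proj pr x \<in> carrier A" using pcpt C.compatD ring_hom_closed[OF pi_hom] by simp
  next
    fix x y assume "x \<in> carrier Bh" "y \<in> carrier Bh"
    then obtain u v where uv: "x = cpt B Kb u" "y = cpt B Kb v" "cpt_compat B Kb u" "cpt_compat B Kb v" unfolding carrBh by blast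
    show "compl_proj pr (x \<otimes>\<^bsub>Bh\<^esub> y) = compl_proj pr x \<otimes>\<^bsub>A\<^esub> compl_proj pr y"
      unfolding uv(1,2) Bh_def C.cpt_mult(1)[OF uv(3,4)] pcpt[OF C.cpt_mult(2)[OF uv(3,4)]] pcpt[OF uv(3)] pcpt[OF uv(4)]
      using ring_hom_mult[OF pi_hom] C.compatD[OF uv(3)] C.compatD[OF uv(4)] by simp
    show "compl_proj pr (x \<oplus>\<^bsub>Bh\<^esub> y) = compl_proj pr x \<oplus>\<^bsub>A\<^esub> compl_proj pr y"
      unfolding uv(1,2) Bh_def C.cpt_add(1)[OF uv(3,4)] pcpt[OF C.cpt_add(2)[OF uv(3,4)]] pcpt[OF uv(3)] pcpt[OF uv(4)]
      using ring_hom_add[OF pi_hom] C.compatD[OF uv(3)] C.compatD[OF uv(4)] by simp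
  next
    show "compl_proj pr \<one>\<^bsub>Bh\<^esub> = \<one>\<^bsub>A\<^esub>"
      unfolding Bh_def C.cpt_one(1) pcpt[OF C.cpt_one(2)] using ring_hom_one[OF pi_hom] by simp
  qed
  interpret P: ring_hom_ring Bh A "compl_proj pr" by (rule ring_hom_ringI2[OF Bh.ring_axioms A.ring_axioms proj_hom])
  have Jh_ker: "Jh = a_kernel Bh A (compl_proj pr)" unfolding Jh_def a_kernel_def' by simp
  have iJh: "ideal Jh Bh" unfolding Jh_ker by (rule P.kernel_is_ideal)
  define phi where "phi = compl_map B Kb \<circ> (sigma \<circ> (+>\<^bsub>A\<^esub>) I)"
  have phi: "phi \<in> ring_hom A Bh" unfolding phi_def
    by (rule ring_hom_trans[OF ring_hom_trans[OF hq[unfolded Q_def] sigma_hom] cm])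
  interpret Phi: ring_hom_ring A Bh phi by (rule ring_hom_ringI2[OF A.ring_axioms Bh.ring_axioms phi])
  have ah_phi: "ah = phi a" unfolding ah_def phi_def by simp
  have aU: "a \<in> Units A" and a1U: "\<one>\<^bsub>A\<^esub> \<ominus>\<^bsub>A\<^esub> a \<in> Units A" using a_flat unfolding flat_units_def by auto
  have ac: "a \<in> carrier A" using aU by blast
  have a1: "a \<ominus>\<^bsub>A\<^esub> \<one>\<^bsub>A\<^esub> = \<ominus>\<^bsub>A\<^esub> \<one>\<^bsub>A\<^esub> \<otimes>\<^bsub>A\<^esub> (\<one>\<^bsub>A\<^esub> \<ominus>\<^bsub>A\<^esub> a)"
    using ac by (simp add: A.minus_eq A.l_minus A.minus_add A.a_comm)
  have a1U': "a \<ominus>\<^bsub>A\<^esub> \<one>\<^bsub>A\<^esub> \<in> Units A" unfolding a1 using a1U by blast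
  have wU: "a [^]\<^bsub>A\<^esub> (2::nat) \<otimes>\<^bsub>A\<^esub> (a \<ominus>\<^bsub>A\<^esub> \<one>\<^bsub>A\<^esub>) [^]\<^bsub>A\<^esub> (2::nat) \<in> Units A"
    using aU a1U' A.Units_pow_closed by blast
  have ahc: "ah \<in> carrier Bh" unfolding ah_phi using ac by simp
  have c2: "m_inv Bh (ah [^]\<^bsub>Bh\<^esub> (2::nat) \<otimes>\<^bsub>Bh\<^esub> (ah \<ominus>\<^bsub>Bh\<^esub> \<one>\<^bsub>Bh\<^esub>) [^]\<^bsub>Bh\<^esub> (2::nat)) \<in> carrier Bh"
  proof -
    have "phi (a [^]\<^bsub>A\<^esub> (2::nat) \<otimes>\<^bsub>A\<^esub> (a \<ominus>\<^bsub>A\<^esub> \<one>\<^bsub>A\<^esub>) [^]\<^bsub>A\<^esub> (2::nat)) =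
       ah [^]\<^bsub>Bh\<^esub> (2::nat) \<otimes>\<^bsub>Bh\<^esub> (ah \<ominus>\<^bsub>Bh\<^esub> \<one>\<^bsub>Bh\<^esub>) [^]\<^bsub>Bh\<^esub> (2::nat)"
      unfolding ah_phi using ac by (simp add: A.minus_eq Bh.minus_eq Phi.hom_nat_pow)
    then have "ah [^]\<^bsub>Bh\<^esub> (2::nat) \<otimes>\<^bsub>Bh\<^esub> (ah \<ominus>\<^bsub>Bh\<^esub> \<one>\<^bsub>Bh\<^esub>) [^]\<^bsub>Bh\<^esub> (2::nat) \<in> Units Bh"
      using hom_units[OF phi wU] by simp
    then show ?thesis by blast
  qed
  have c1: "m_inv Bh (\<one>\<^bsub>Bh\<^esub> \<oplus>\<^bsub>Bh\<^esub> \<one>\<^bsub>Bh\<^esub>) \<in> carrier Bh"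
  proof -
    have "add_pow K (2::nat) \<one>\<^bsub>K\<^esub> \<noteq> \<zero>\<^bsub>K\<^esub>" using char0 by simp
    then have "\<one>\<^bsub>K\<^esub> \<oplus>\<^bsub>K\<^esub> \<one>\<^bsub>K\<^esub> \<noteq> \<zero>\<^bsub>K\<^esub>" by (simp add: add_pow_def numeral_2_eq_2)
    then have "\<one>\<^bsub>K\<^esub> \<oplus>\<^bsub>K\<^esub> \<one>\<^bsub>K\<^esub> \<in> Units K" by (simp add: Kf.field_Units)
    then have "(phi \<circ> iA) (\<one>\<^bsub>K\<^esub> \<oplus>\<^bsub>K\<^esub> \<one>\<^bsub>K\<^esub>) \<in> Units Bh"
      using hom_units[OF ring_hom_trans[OF iA_hom phi]] by blast
    moreover have "(phi \<circ> iA) (\<one>\<^bsub>K\<^esub> \<oplus>\<^bsub>K\<^esub> \<one>\<^bsub>K\<^esub>) = \<one>\<^bsub>Bh\<^esub> \<oplus>\<^bsub>Bh\<^esub> \<one>\<^bsub>Bh\<^esub>"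
      using ring_hom_add[OF ring_hom_trans[OF iA_hom phi]] ring_hom_one[OF ring_hom_trans[OF iA_hom phi]] by simp
    ultimately show ?thesis by (metis Bh.Units_inv_closed)
  qed
  define D where "D = m_inv Bh (\<one>\<^bsub>Bh\<^esub> \<oplus>\<^bsub>Bh\<^esub> \<one>\<^bsub>Bh\<^esub>) \<otimes>\<^bsub>Bh\<^esub> m_inv Bh (ah [^]\<^bsub>Bh\<^esub> (2::nat) \<otimes>\<^bsub>Bh\<^esub> (ah \<ominus>\<^bsub>Bh\<^esub> \<one>\<^bsub>Bh\<^esub>) [^]\<^bsub>Bh\<^esub> (2::nat))"
  have Dc: "D \<in> carrier Bh" unfolding D_def using c1 c2 by simp
  have xv_eq: "\<And>t. t \<in> carrier Bh \<Longrightarrow> xv t = \<ominus>\<^bsub>Bh\<^esub> ((t \<ominus>\<^bsub>Bh\<^esub> ah) \<otimes>\<^bsub>Bh\<^esub> (t \<ominus>\<^bsub>Bh\<^esub> ah) \<otimes>\<^bsub>Bh\<^esub> (t \<ominus>\<^bsub>Bh\<^esub> ah) \<otimes>\<^bsub>Bh\<^esub> D)"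
  proof -
    fix t assume t: "t \<in> carrier Bh"
    then have y: "t \<ominus>\<^bsub>Bh\<^esub> ah \<in> carrier Bh" using ahc by simp
    show "?thesis t" unfolding xv_def D_def using y c1 c2 by (simp add: numeral_3_eq_3 Bh.m_ac)
  qed
  have Iac: "I +>\<^bsub>A\<^esub> a \<in> carrier (A Quot I)" using ring_hom_closed[OF hq ac] unfolding Q_def .
  define e where "e = a \<ominus>\<^bsub>A\<^esub> tau (I +>\<^bsub>A\<^esub> a)"
  have tc: "tau (I +>\<^bsub>A\<^esub> a) \<in> carrier A" using ring_hom_closed[OF tau_hom Iac] .
  have eI: "e \<in> I"
  proof -
    have sI: "abelian_subgroup I A" by (rule ideal_abs[OF cring_A ideal_I])
    have "a \<in> I +>\<^bsub>A\<^esub> a" by (rule abelian_subgroup.a_rcos_self[OF sI ac])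
    then have "a \<in> I +>\<^bsub>A\<^esub> tau (I +>\<^bsub>A\<^esub> a)" using tau_split Iac by simp
    then show ?thesis unfolding e_def using abelian_subgroup.a_rcos_module_minus[OF sI A.ring_axioms tc ac] by simp
  qed
  have ec: "e \<in> carrier A" unfolding e_def using ac tc by simp
  have ee: "e \<otimes>\<^bsub>A\<^esub> e = \<zero>\<^bsub>A\<^esub>" using I_sq eI by simp
  have proj_ah: "compl_proj pr ah = tau (I +>\<^bsub>A\<^esub> a)"
    unfolding ah_def using proj_cm[OF ring_hom_closed[OF sigma_hom Iac]] pi_alg Iac by simp
  have proj_y: "\<And>t. t \<in> carrier Bh \<Longrightarrow> compl_proj pr t = a \<Longrightarrow> compl_proj pr (t \<ominus>\<^bsub>Bh\<^esub> ah) = e"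
    unfolding e_def using ahc proj_ah by (simp add: Bh.minus_eq A.minus_eq)
  have yy: "\<And>t s. t \<in> carrier Bh \<Longrightarrow> compl_proj pr t = a \<Longrightarrow> s \<in> carrier Bh \<Longrightarrow> compl_proj pr s = a \<Longrightarrow>
      (t \<ominus>\<^bsub>Bh\<^esub> ah) \<otimes>\<^bsub>Bh\<^esub> (s \<ominus>\<^bsub>Bh\<^esub> ah) \<in> Jh"
    unfolding Jh_def using proj_y ahc ee by simp
  have JhC: "Jh \<subseteq> carrier Bh" unfolding Jh_def by auto
  show ?thesis
  proof (intro conjI ballI impI)
    fix t assume t: "t \<in> carrier Bh" and pt: "compl_proj pr t = a"
    define y where "y = t \<ominus>\<^bsub>Bh\<^esub> ah"
    have yc: "y \<in> carrier Bh" unfolding y_def using t ahc by simp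
    have yyJ: "y \<otimes>\<^bsub>Bh\<^esub> y \<in> Jh" unfolding y_def using yy[OF t pt t pt] .
    have Y: "y \<otimes>\<^bsub>Bh\<^esub> y \<otimes>\<^bsub>Bh\<^esub> y \<in> Jh" using ideal.I_r_closed[OF iJh yyJ yc] .
    have xe: "xv t = (y \<otimes>\<^bsub>Bh\<^esub> y \<otimes>\<^bsub>Bh\<^esub> y) \<otimes>\<^bsub>Bh\<^esub> (\<ominus>\<^bsub>Bh\<^esub> D)"
      unfolding xv_eq[OF t] y_def[symmetric] using yc Dc by (simp add: Bh.r_minus)
    show "xv t \<in> Jh" unfolding xe using ideal.I_r_closed[OF iJh Y] Dc by simp
    show "d_zero_mod Bh Jh (xv t)" unfolding xe
      by (rule dzero[OF Bh.cring_axioms iJh yc yyJ]) (simp add: Dc)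
  next
    fix t1 t2 assume t1: "t1 \<in> carrier Bh" and t2: "t2 \<in> carrier Bh"
      and p1: "compl_proj pr t1 = a" and p2: "compl_proj pr t2 = a"
    define y1 where "y1 = t1 \<ominus>\<^bsub>Bh\<^esub> ah"
    define y2 where "y2 = t2 \<ominus>\<^bsub>Bh\<^esub> ah"
    define eps where "eps = t2 \<ominus>\<^bsub>Bh\<^esub> t1"
    have y1c: "y1 \<in> carrier Bh" unfolding y1_def using t1 ahc by simp
    have y2c: "y2 \<in> carrier Bh" unfolding y2_def using t2 ahc by simp
    have epsc: "eps \<in> carrier Bh" unfolding eps_def using t1 t2 by simp
    have epsJ: "eps \<in> Jh" unfolding Jh_def eps_def using t1 t2 p1 p2 by (simp add: Bh.minus_eq A.r_neg ac)
    have y2e: "y2 = y1 \<oplus>\<^bsub>Bh\<^esub> eps"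
    proof -
      have "t2 = t1 \<oplus>\<^bsub>Bh\<^esub> eps" unfolding eps_def using t1 t2 using Bh.r_neg2[of t1 t2] Bh.a_comm[of t2 "\<ominus>\<^bsub>Bh\<^esub> t1"] by (simp add: Bh.minus_eq)
      then show ?thesis unfolding y2_def y1_def using t1 epsc ahc by (simp add: Bh.minus_eq Bh.a_ac)
    qed
    define S where "S = y2 \<otimes>\<^bsub>Bh\<^esub> y2 \<oplus>\<^bsub>Bh\<^esub> y2 \<otimes>\<^bsub>Bh\<^esub> y1 \<oplus>\<^bsub>Bh\<^esub> y1 \<otimes>\<^bsub>Bh\<^esub> y1"
    have SJ: "S \<in> Jh" unfolding S_def y1_def y2_def
      using yy[OF t2 p2 t2 p2] yy[OF t2 p2 t1 p1] yy[OF t1 p1 t1 p1] iJh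
      by (meson additive_subgroup.a_closed ideal.axioms(1))
    have Sc: "S \<in> carrier Bh" using SJ JhC by blast
    have cube: "y2 \<otimes>\<^bsub>Bh\<^esub> y2 \<otimes>\<^bsub>Bh\<^esub> y2 = y1 \<otimes>\<^bsub>Bh\<^esub> y1 \<otimes>\<^bsub>Bh\<^esub> y1 \<oplus>\<^bsub>Bh\<^esub> eps \<otimes>\<^bsub>Bh\<^esub> S"
      unfolding S_def y2e by (rule cube_id[OF Bh.cring_axioms y1c epsc])
    have "xv t1 \<ominus>\<^bsub>Bh\<^esub> xv t2 = (eps \<otimes>\<^bsub>Bh\<^esub> D) \<otimes>\<^bsub>Bh\<^esub> S"
    proof -
      have "xv t1 \<ominus>\<^bsub>Bh\<^esub> xv t2 = \<ominus>\<^bsub>Bh\<^esub> (y1 \<otimes>\<^bsub>Bh\<^esub> y1 \<otimes>\<^bsub>Bh\<^esub> y1 \<otimes>\<^bsub>Bh\<^esub> D) \<oplus>\<^bsub>Bh\<^esub> (y2 \<otimes>\<^bsub>Bh\<^esub> y2 \<otimes>\<^bsub>Bh\<^esub> y2 \<otimes>\<^bsub>Bh\<^esub> D)"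
        unfolding xv_eq[OF t1] xv_eq[OF t2] y1_def[symmetric] y2_def[symmetric] using y1c y2c Dc
        by (simp add: Bh.minus_eq)
      also have "\<dots> = \<ominus>\<^bsub>Bh\<^esub> (y1 \<otimes>\<^bsub>Bh\<^esub> y1 \<otimes>\<^bsub>Bh\<^esub> y1 \<otimes>\<^bsub>Bh\<^esub> D) \<oplus>\<^bsub>Bh\<^esub> (y1 \<otimes>\<^bsub>Bh\<^esub> y1 \<otimes>\<^bsub>Bh\<^esub> y1 \<otimes>\<^bsub>Bh\<^esub> D \<oplus>\<^bsub>Bh\<^esub> eps \<otimes>\<^bsub>Bh\<^esub> S \<otimes>\<^bsub>Bh\<^esub> D)"
        unfolding cube using y1c epsc Sc Dc by (simp add: Bh.l_distr)
      also have "\<dots> = eps \<otimes>\<^bsub>Bh\<^esub> S \<otimes>\<^bsub>Bh\<^esub> D"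
        by (rule diff_cancel[OF Bh.cring_axioms]) (use y1c epsc Sc Dc in simp_all)
      also have "\<dots> = (eps \<otimes>\<^bsub>Bh\<^esub> D) \<otimes>\<^bsub>Bh\<^esub> S" using epsc Sc Dc by (simp add: Bh.m_ac)
      finally show ?thesis .
    qed
    moreover have "eps \<otimes>\<^bsub>Bh\<^esub> D \<in> Jh" using ideal.I_r_closed[OF iJh epsJ Dc] .
    ultimately show "xv t1 \<ominus>\<^bsub>Bh\<^esub> xv t2 \<in> Jh \<cdot>\<^bsub>Bh\<^esub> Jh" using ideal_prod.prod SJ by metis
  qed
qed

end
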